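(* The set $\mathcal{P}_{\mathrm{fin}}(I)$ of finite subsets of $I$ is a quantifier-free definable subset of the structure $\mathcal{L}(I)$.
   Context: Let $I$ be a dense linear order with left endpoint $0$ and no right endpoint. Let $\mathcal{P}_{\mathrm{fci}}(I)$ be the set of finite unions of closed intervals $[i,j]$, $[i,+\infty)$, $(-\infty,j]$ of $I$. $\mathcal{L}(I)$ is the structure with universe $\mathcal{P}_{\mathrm{fci}}(I)$ in the signature $\{\cup,\cap,\bot,c_0,\min,\max,l,r\}$, interpreted as follows. - $\cup$ and $\cap$ are union and intersection. - $\bot$ is $\emptyset$, and $c_0$ is $\{0\}$. - $\min(A)$ is the singleton of the least element of $A$, with $\min(\emptyset)=\emptyset$. - $\max(A)$ is the singleton of the greatest element when $A$ is nonempty and bounded, and $\emptyset$ otherwise. - $l(A)$ and $r(A)$ are the sets of left and right endpoints of $A$. Left endpoints are the minima of the maximal closed intervals composing $A$. Right endpoints are the maxima of the bounded ones. *)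

theory Defs
  imports Main
begin

text \<open>The dense linear order I is the universe of a linorder type 'a; its left
endpoint 0 is a parameter z0 (assumed least).\<close>

definition closed_int :: "'a::linorder set \<Rightarrow> bool" where
  "closed_int J \<longleftrightarrow> (\<exists>i j. i \<le> j \<and> J = {i..j}) \<or> (\<exists>i. J = {i..}) \<or> (\<exists>j. J = {..j})"

definition fci :: "'a::linorder set set" where
  "fci = {A. \<exists>F. finite F \<and> (\<forall>J\<in>F. closed_int J) \<and> A = \<Union>F}"

definition max_int :: "'a::linorder set \<Rightarrow> 'a set \<Rightarrow> bool" where
  "max_int A J \<longleftrightarrow> closed_int J \<and> J \<subseteq> A \<and>
     (\<forall>K. closed_int K \<and> J \<subseteq> K \<and> K \<subseteq> A \<longrightarrow> K = J)"

definition lend :: "'a::linorder set \<Rightarrow> 'a set" where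
  "lend A = {i. \<exists>J. max_int A J \<and> i \<in> J \<and> (\<forall>x\<in>J. i \<le> x)}"

definition rend :: "'a::linorder set \<Rightarrow> 'a set" where
  "rend A = {j. \<exists>J. max_int A J \<and> j \<in> J \<and> (\<forall>x\<in>J. x \<le> j)}"

definition minS :: "'a::linorder set \<Rightarrow> 'a set" where
  "minS A = (if A = {} then {} else {LEAST x. x \<in> A})"

definition maxS :: "'a::linorder set \<Rightarrow> 'a set" where
  "maxS A = (if A \<noteq> {} \<and> bdd_above A then {GREATEST x. x \<in> A} else {})"

datatype tm = Var | Bot | C0 | Cup tm tm | Cap tm tm | Mn tm | Mx tm | Lt tm | Rt tm

datatype qf = Eq tm tm | Neg qf | Conj qf qf | Disj qf qf

fun tval :: "'a::linorder \<Rightarrow> 'a set \<Rightarrow> tm \<Rightarrow> 'a set" where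
  "tval z A Var = A"
| "tval z A Bot = {}"
| "tval z A C0 = {z}"
| "tval z A (Cup s t) = tval z A s \<union> tval z A t"
| "tval z A (Cap s t) = tval z A s \<inter> tval z A t"
| "tval z A (Mn t) = minS (tval z A t)"
| "tval z A (Mx t) = maxS (tval z A t)"
| "tval z A (Lt t) = lend (tval z A t)"
| "tval z A (Rt t) = rend (tval z A t)"

fun holds :: "'a::linorder \<Rightarrow> 'a set \<Rightarrow> qf \<Rightarrow> bool" where
  "holds z A (Eq s t) = (tval z A s = tval z A t)"
| "holds z A (Neg p) = (\<not> holds z A p)"
| "holds z A (Conj p q) = (holds z A p \<and> holds z A q)"
| "holds z A (Disj p q) = (holds z A p \<or> holds z A q)"

end

theory Submission
  imports Defs
begin

lemma dense_inf:
  fixes x y :: "'a::linorder"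
  assumes dense: "\<forall>x y::'a. x < y \<longrightarrow> (\<exists>z. x < z \<and> z < y)" and "x < y"
  shows "infinite {x..y}"
proof
  assume f: "finite {x..y}"
  have "finite {x<..y}" using f by (rule finite_subset[rotated]) auto
  moreover have "y \<in> {x<..y}" using assms by auto
  ultimately have m: "Min {x<..y} \<in> {x<..y}" by (intro Min_in) auto
  then obtain z where "x < z" "z < Min {x<..y}" using dense by auto
  moreover have "z \<in> {x<..y}" using calculation m by auto
  ultimately show False using Min_le[OF \<open>finite {x<..y}\<close>] by fastforce
qed

lemma closed_int_convex:
  assumes "closed_int J" "a \<in> J" "b \<in> J"
  shows "{a..b} \<subseteq> J"
  using assms unfolding closed_int_def by auto

lemma three_points:
  fixes J :: "'a::linorder set"
  assumes "infinite J"
  shows "\<exists>a x b. a \<in> J \<and> b \<in> J \<and> a < x \<and> x < b \<and> x \<in> J"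
proof -
  obtain S where S: "S \<subseteq> J" "card S = 3" "finite S"
    using infinite_arbitrarily_large[OF assms] by blast
  then obtain a x b where "S = {a, x, b}" "a \<noteq> x" "x \<noteq> b" "a \<noteq> b"
    by (auto simp: card_Suc_eq numeral_eq_Suc)
  with S show ?thesis
    by (cases "a < x"; cases "x < b"; cases "a < b"; auto simp: not_less dest: order.antisym)
       (metis less_le)+
qed

theorem proposition5p1:
  fixes z0 :: "'a::linorder"
  assumes dense: "\<forall>x y::'a. x < y \<longrightarrow> (\<exists>z. x < z \<and> z < y)"
    and left_endpoint: "\<forall>x. z0 \<le> x"
    and no_right_endpoint: "\<forall>x::'a. \<exists>y. x < y"
  shows "\<exists>\<phi>::qf. \<forall>A\<in>(fci :: 'a set set). holds z0 A \<phi> \<longleftrightarrow> finite A"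
proof (intro exI[of _ "Eq Var (Lt Var)"] ballI)
  fix A :: "'a set"
  assume A: "A \<in> fci"
  have sub: "lend A \<subseteq> A" unfolding lend_def max_int_def by auto
  show "holds z0 A (Eq Var (Lt Var)) \<longleftrightarrow> finite A"
  proof
    assume "holds z0 A (Eq Var (Lt Var))"
    hence eq: "lend A = A" by simp
    show "finite A"
    proof (rule ccontr)
      assume inf: "infinite A"
      obtain F where F: "finite F" "\<forall>J\<in>F. closed_int J" "A = \<Union>F"
        using A unfolding fci_def by auto
      then obtain J where J: "J \<in> F" "infinite J" using inf by auto
      then obtain a x b where ax: "a \<in> J" "b \<in> J" "a < x" "x < b" "x \<in> J"
        using three_points by blast
      have abJ: "{a..b} \<subseteq> J" using closed_int_convex F J ax by blast
      have axA: "{a..x} \<subseteq> A" using abJ F(3) J(1) ax(4) by fastforce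
      have "x \<in> A" using ax(5) F(3) J(1) by blast
      hence "x \<in> lend A" using eq by simp
      then obtain K where K: "max_int A K" "x \<in> K" "\<forall>y\<in>K. x \<le> y"
        unfolding lend_def by auto
      have aK: "a \<notin> K" by (meson K(3) ax(3) not_le)
      have ci: "closed_int K" "K \<subseteq> A" and mx: "\<And>K'. closed_int K' \<Longrightarrow> K \<subseteq> K' \<Longrightarrow> K' \<subseteq> A \<Longrightarrow> K' = K"
        using K unfolding max_int_def by auto
      have "closed_int (K \<union> {a..x})"
        using ci(1) K(2,3) ax(3) aK unfolding closed_int_def[of K]
      proof (elim disjE exE conjE)
        fix i j assume ij: "i \<le> j" and Kij: "K = {i..j}"
        have "i \<le> x" using K(2) Kij by simp
        moreover have "x \<le> i" using K(3) Kij ij by simp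
        ultimately have ix: "i = x" by (rule order.antisym)
        have "K \<union> {a..x} = {a..j}" unfolding Kij ix using ij ix ax(3)
          by (auto simp: ivl_disj_un)
        moreover have "a \<le> j" using ix ij ax(3) by simp
        ultimately show ?thesis unfolding closed_int_def
          by (intro disjI1 exI[of _ a] exI[of _ j]) simp
      next
        fix i assume Ki: "K = {i..}"
        have "i \<le> x" using K(2) Ki by simp
        moreover have "x \<le> i" using K(3) Ki by simp
        ultimately have ix: "i = x" by (rule order.antisym)
        have "K \<union> {a..x} = {a..}" unfolding Ki ix using ax(3)
          by (auto simp: ivl_disj_un)
        thus ?thesis unfolding closed_int_def
          by (intro disjI2 disjI1 exI[of _ a]) simp
      next
        fix j assume "K = {..j}"
        hence "a \<in> K" using K(2) ax(3) by simp
        thus ?thesis using aK by blast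
      qed
      hence "K \<union> {a..x} = K" using mx ci axA by blast
      moreover have "a \<in> {a..x}" using ax(3) by simp
      ultimately show False using aK by blast
    qed
  next
    assume fin: "finite A"
    have "A \<subseteq> lend A"
    proof
      fix x assume x: "x \<in> A"
      have "max_int A {x..x}" unfolding max_int_def
      proof (intro conjI allI impI)
        show "closed_int {x..x}" unfolding closed_int_def by blast
        show "{x..x} \<subseteq> A" using x by auto
      next
        fix K assume K: "closed_int K \<and> {x..x} \<subseteq> K \<and> K \<subseteq> A"
        show "K = {x..x}"
        proof (rule ccontr)
          assume "K \<noteq> {x..x}"
          then obtain y where y: "y \<in> K" "y \<noteq> x" using K by auto
          have xK: "x \<in> K" using K by auto
          have finK: "finite K" using K fin finite_subset by blast
          show False
          proof (cases "x < y")
            case True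
            have "{x..y} \<subseteq> K" using closed_int_convex K xK y by blast
            thus False using dense_inf[OF dense True] finK finite_subset by blast
          next
            case False
            hence "y < x" using y by auto
            have "{y..x} \<subseteq> K" using closed_int_convex K xK y by blast
            thus False using dense_inf[OF dense \<open>y < x\<close>] finK finite_subset by blast
          qed
        qed
      qed
      thus "x \<in> lend A" unfolding lend_def by auto
    qed
    thus "holds z0 A (Eq Var (Lt Var))" using sub by simp
  qed
qed

end
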